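(* Let $\mathbf K$ be a commutative field, $p,q\in\mathbb N$, and let $\mathcal A\subset\mathbf K^{\mathcal M_{p\times q}}$ be a recursively closed vector space with finite saturation level $N$. Then $\mathcal A$ and $\mathcal A[\mathcal M_{p\times q}^{\le N}]$ are isomorphic. In particular $\mathcal A$ is finite-dimensional and contained in $\mathrm{Rec}_{p\times q}(\mathbf K)$.
   Context: For $p,q,l\in\mathbb N$, $\mathcal M_{p\times q}^l$ is the set of pairs $(U,W)$ of words of common length $l$ with $U\in\{0,\dots,p-1\}^l$, $W\in\{0,\dots,q-1\}^l$; $\mathcal M_{p\times q}=\bigcup_l\mathcal M_{p\times q}^l$ (a monoid under concatenation) and $\mathcal M_{p\times q}^{\le l}$ is the set of words of length at most $l$. $\mathbf K^{\mathcal M_{p\times q}}$ is the space of functions $\mathcal M_{p\times q}\to\mathbf K$, values written $A[U,W]$. Shift maps: $(\rho(S,T)A)[U,W]=A[US,WT]$. A subspace is recursively closed if it is invariant under all shift maps. For a subspace $\mathcal A$, $\mathcal A[\mathcal M_{p\times q}^{\le l}]$ denotes the image of $\mathcal A$ under restriction of functions to $\mathcal M_{p\times q}^{\le l}$. The saturation level of a non-zero subspace $\mathcal A$ is the smallest integer $N\ge0$ (if any) such that the natural projection $\mathcal A[\mathcal M_{p\times q}^{\le N+1}]\to\mathcal A[\mathcal M_{p\times q}^{\le N}]$ is an isomorphism; it is $\infty$ if no such $N$ exists, and the zero space has saturation level $-1$. $\mathrm{Rec}_{p\times q}(\mathbf K)$ is the set of $A$ whose linear span of $\{\rho(S,T)A\}$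 is finite-dimensional. *)

theory Defs
  imports Main
begin

definition inM :: "nat \<Rightarrow> nat \<Rightarrow> nat list \<times> nat list \<Rightarrow> bool" where
  "inM p q x \<longleftrightarrow> length (fst x) = length (snd x) \<and> set (fst x) \<subseteq> {..<p} \<and> set (snd x) \<subseteq> {..<q}"

definition inM_le :: "nat \<Rightarrow> nat \<Rightarrow> nat \<Rightarrow> nat list \<times> nat list \<Rightarrow> bool" where
  "inM_le p q l x \<longleftrightarrow> inM p q x \<and> length (fst x) \<le> l"

(* K^{M_{p x q}}: functions on M_{p x q}, represented extensionally (zero outside M) *)
definition KM :: "nat \<Rightarrow> nat \<Rightarrow> (nat list \<times> nat list \<Rightarrow> 'a::field) set" where
  "KM p q = {A. \<forall>x. \<not> inM p q x \<longrightarrow> A x = 0}"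

definition is_subspace :: "nat \<Rightarrow> nat \<Rightarrow> (nat list \<times> nat list \<Rightarrow> 'a::field) set \<Rightarrow> bool" where
  "is_subspace p q \<A> \<longleftrightarrow> \<A> \<subseteq> KM p q \<and> (\<lambda>x. 0) \<in> \<A> \<and>
     (\<forall>f\<in>\<A>. \<forall>g\<in>\<A>. (\<lambda>x. f x + g x) \<in> \<A>) \<and> (\<forall>c. \<forall>f\<in>\<A>. (\<lambda>x. c * f x) \<in> \<A>)"

definition shift :: "nat list \<Rightarrow> nat list \<Rightarrow> (nat list \<times> nat list \<Rightarrow> 'a) \<Rightarrow> (nat list \<times> nat list \<Rightarrow> 'a)" where
  "shift S T A = (\<lambda>(U, W). A (U @ S, W @ T))"

definition rec_closed :: "nat \<Rightarrow> nat \<Rightarrow> (nat list \<times> nat list \<Rightarrow> 'a) set \<Rightarrow> bool" where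
  "rec_closed p q \<A> \<longleftrightarrow> (\<forall>S T. inM p q (S, T) \<longrightarrow> (\<forall>A\<in>\<A>. shift S T A \<in> \<A>))"

definition restr :: "nat \<Rightarrow> nat \<Rightarrow> nat \<Rightarrow> (nat list \<times> nat list \<Rightarrow> 'a::zero) \<Rightarrow> (nat list \<times> nat list \<Rightarrow> 'a)" where
  "restr p q l A = (\<lambda>x. if inM_le p q l x then A x else 0)"

(* the natural projection A[M^{<=N+1}] -> A[M^{<=N}] (always surjective) is an isomorphism,
   i.e. injective *)
definition proj_iso :: "nat \<Rightarrow> nat \<Rightarrow> (nat list \<times> nat list \<Rightarrow> 'a::zero) set \<Rightarrow> nat \<Rightarrow> bool" where
  "proj_iso p q \<A> N \<longleftrightarrow> bij_betw (restr p q N) (restr p q (Suc N) ` \<A>) (restr p q N ` \<A>)"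

definition has_saturation_level :: "nat \<Rightarrow> nat \<Rightarrow> (nat list \<times> nat list \<Rightarrow> 'a::zero) set \<Rightarrow> nat \<Rightarrow> bool" where
  "has_saturation_level p q \<A> N \<longleftrightarrow> \<A> \<noteq> {\<lambda>x. 0} \<and> proj_iso p q \<A> N \<and> (\<forall>M<N. \<not> proj_iso p q \<A> M)"

definition lin_span :: "(nat list \<times> nat list \<Rightarrow> 'a::field) set \<Rightarrow> (nat list \<times> nat list \<Rightarrow> 'a) set" where
  "lin_span B = {(\<lambda>x. \<Sum>b\<in>B. c b * b x) | c. True}"

definition fin_dim :: "(nat list \<times> nat list \<Rightarrow> 'a::field) set \<Rightarrow> bool" where
  "fin_dim \<A> \<longleftrightarrow> (\<exists>B. finite B \<and> B \<subseteq> \<A> \<and> \<A> \<subseteq> lin_span B)"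

definition Rec :: "nat \<Rightarrow> nat \<Rightarrow> (nat list \<times> nat list \<Rightarrow> 'a::field) set" where
  "Rec p q = {A \<in> KM p q. \<exists>B. finite B \<and> (\<forall>S T. inM p q (S, T) \<longrightarrow> shift S T A \<in> lin_span B)}"

end

theory Submission
  imports Defs
begin

lemma subD:
  assumes "is_subspace p q \<A>"
  shows "\<A> \<subseteq> KM p q" "(\<lambda>x. 0) \<in> \<A>"
    "\<And>f g. f \<in> \<A> \<Longrightarrow> g \<in> \<A> \<Longrightarrow> (\<lambda>x. f x + g x) \<in> \<A>"
    "\<And>c f. f \<in> \<A> \<Longrightarrow> (\<lambda>x. c * f x) \<in> \<A>"
  using assms unfolding is_subspace_def by auto

lemma sub_diff:
  assumes "is_subspace p q \<A>" "f \<in> \<A>" "g \<in> \<A>"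
  shows "(\<lambda>x. f x - g x) \<in> \<A>"
proof -
  have "(\<lambda>x. (-1) * g x) \<in> \<A>" by (rule subD(4)[OF assms(1) assms(3)])
  from subD(3)[OF assms(1) assms(2) this] show ?thesis by simp
qed

lemma sub_sum:
  assumes "is_subspace p q \<A>" "finite B" "B \<subseteq> \<A>"
  shows "(\<lambda>x. \<Sum>b\<in>B. c b * b x) \<in> \<A>"
  using assms(2,3)
proof (induction B rule: finite_induct)
  case empty
  then show ?case using subD(2)[OF assms(1)] by simp
next
  case (insert a F)
  have h1: "(\<lambda>x. c a * a x) \<in> \<A>" using insert.prems by (intro subD(4)[OF assms(1)]) simp
  have h2: "(\<lambda>x. \<Sum>b\<in>F. c b * b x) \<in> \<A>" using insert.IH insert.prems by simp
  from subD(3)[OF assms(1) h1 h2] show ?case using insert.hyps by simp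
qed

lemma basis_on:
  assumes "finite X"
  shows "is_subspace p q \<A> \<Longrightarrow> \<exists>B. finite B \<and> B \<subseteq> \<A> \<and>
           (\<forall>A\<in>\<A>. \<exists>c. \<forall>x\<in>X. A x = (\<Sum>b\<in>B. c b * b x))"
  using assms
proof (induction X arbitrary: \<A> rule: finite_induct)
  case empty
  then show ?case by auto
next
  case (insert y X)
  define \<A>' where "\<A>' = {A\<in>\<A>. A y = 0}"
  have s': "is_subspace p q \<A>'"
    using insert.prems unfolding is_subspace_def \<A>'_def by auto
  obtain B' where B': "finite B'" "B' \<subseteq> \<A>'"
    "\<forall>A\<in>\<A>'. \<exists>c. \<forall>x\<in>X. A x = (\<Sum>b\<in>B'. c b * b x)"
    using insert.IH[OF s'] by blast
  show ?case
  proof (cases "\<exists>a0\<in>\<A>. a0 y \<noteq> 0")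
    case False
    then have eq: "\<A>' = \<A>" unfolding \<A>'_def by auto
    have z: "\<forall>b\<in>B'. b y = 0" using B'(2) unfolding \<A>'_def by auto
    show ?thesis
    proof (intro exI[of _ B'] conjI ballI)
      show "finite B'" "B' \<subseteq> \<A>" using B' eq by auto
    next
      fix A assume A: "A \<in> \<A>"
      then have Ay: "A y = 0" using eq unfolding \<A>'_def by auto
      obtain c where c: "\<forall>x\<in>X. A x = (\<Sum>b\<in>B'. c b * b x)" using B'(3) A eq by blast
      have "(\<Sum>b\<in>B'. c b * b y) = 0" by (intro sum.neutral) (simp add: z)
      then have "\<forall>x\<in>insert y X. A x = (\<Sum>b\<in>B'. c b * b x)" using c Ay by simp
      then show "\<exists>c. \<forall>x\<in>insert y X. A x = (\<Sum>b\<in>B'. c b * b x)" by blast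
    qed
  next
    case True
    then obtain a0 where a0: "a0 \<in> \<A>" "a0 y \<noteq> 0" by blast
    have nin: "a0 \<notin> B'" using B'(2) a0 unfolding \<A>'_def by auto
    show ?thesis
    proof (intro exI[of _ "insert a0 B'"] conjI ballI)
      show "finite (insert a0 B')" using B' by simp
      show "insert a0 B' \<subseteq> \<A>" using B' a0 unfolding \<A>'_def by auto
    next
      fix A assume A: "A \<in> \<A>"
      define k where "k = A y / a0 y"
      have "(\<lambda>x. k * a0 x) \<in> \<A>" using insert.prems a0 unfolding is_subspace_def by blast
      then have "(\<lambda>x. A x - k * a0 x) \<in> \<A>" using sub_diff[OF insert.prems A] by blast
      moreover have "A y - k * a0 y = 0" using a0 unfolding k_def by simp
      ultimately have "(\<lambda>x. A x - k * a0 x) \<in> \<A>'" unfolding \<A>'_def by simp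
      then obtain c where c: "\<forall>x\<in>X. A x - k * a0 x = (\<Sum>b\<in>B'. c b * b x)" using B'(3) by fastforce
      have z: "\<forall>b\<in>B'. b y = 0" using B'(2) unfolding \<A>'_def by auto
      define c' where "c' = c(a0 := k)"
      have sB: "(\<Sum>b\<in>B'. c' b * b x) = (\<Sum>b\<in>B'. c b * b x)" for x
        using nin unfolding c'_def by (intro sum.cong) auto
      have "\<forall>x\<in>insert y X. A x = (\<Sum>b\<in>insert a0 B'. c' b * b x)"
      proof
        fix x assume x: "x \<in> insert y X"
        have e: "(\<Sum>b\<in>insert a0 B'. c' b * b x) = k * a0 x + (\<Sum>b\<in>B'. c b * b x)"
          using B'(1) nin sB unfolding c'_def by simp
        show "A x = (\<Sum>b\<in>insert a0 B'. c' b * b x)"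
        proof (cases "x = y")
          case True
          have "(\<Sum>b\<in>B'. c b * b y) = 0" by (intro sum.neutral) (simp add: z)
          then show ?thesis using e z a0 True unfolding k_def by simp
        next
          case False
          then have "x \<in> X" using x by simp
          then have cx: "A x - k * a0 x = (\<Sum>b\<in>B'. c b * b x)" using c by blast
          have "A x = k * a0 x + (A x - k * a0 x)" by simp
          then show ?thesis using e cx by simp
        qed
      qed
      then show "\<exists>c. \<forall>x\<in>insert y X. A x = (\<Sum>b\<in>insert a0 B'. c b * b x)" by blast
    qed
  qed
qed

lemma step1:
  assumes "is_subspace p q \<A>" "proj_iso p q \<A> N" "A \<in> \<A>"
    "\<forall>x. inM_le p q N x \<longrightarrow> A x = 0"
  shows "\<forall>x. inM_le p q (Suc N) x \<longrightarrow> A x = 0"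
proof -
  have z: "(\<lambda>x. 0) \<in> \<A>" using assms(1) unfolding is_subspace_def by blast
  have inj: "inj_on (restr p q N) (restr p q (Suc N) ` \<A>)"
    using assms(2) unfolding proj_iso_def bij_betw_def by blast
  have r: "restr p q N (restr p q (Suc N) A) = restr p q N (restr p q (Suc N) (\<lambda>x. 0))"
    using assms(4) unfolding restr_def inM_le_def by (auto simp: fun_eq_iff)
  have "restr p q (Suc N) A = restr p q (Suc N) (\<lambda>x. 0)"
    using inj r assms(3) z unfolding inj_on_def by blast
  then have "\<forall>x. restr p q (Suc N) A x = 0" unfolding restr_def by (simp add: fun_eq_iff)
  then show ?thesis unfolding restr_def by presburger
qed

lemma inM_snoc:
  assumes "inM p q (U @ [s], W @ [t])"
  shows "inM p q (U, W)" "inM p q ([s], [t])"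
  using assms unfolding inM_def by auto

lemma kernel:
  assumes "is_subspace p q \<A>" "rec_closed p q \<A>" "proj_iso p q \<A> N"
  shows "A \<in> \<A> \<Longrightarrow> \<forall>x. inM_le p q N x \<longrightarrow> A x = 0 \<Longrightarrow> \<forall>x. inM_le p q (N + k) x \<longrightarrow> A x = 0"
proof (induction k arbitrary: A)
  case 0
  then show ?case by simp
next
  case (Suc k)
  have v1: "\<forall>x. inM_le p q (Suc N) x \<longrightarrow> A x = 0" using step1[OF assms(1,3) Suc.prems] .
  show ?case
  proof (intro allI impI)
    fix x assume x: "inM_le p q (N + Suc k) x"
    obtain U W where xe: "x = (U, W)" by force
    show "A x = 0"
    proof (cases "length U \<le> Suc N")
      case True
      then show ?thesis using v1 x xe unfolding inM_le_def by auto
    next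
      case False
      have lw: "length W = length U" using x xe unfolding inM_le_def inM_def by auto
      have "U \<noteq> []" "W \<noteq> []" using False lw by auto
      then obtain U' s W' t where U: "U = U' @ [s]" and W: "W = W' @ [t]"
        by (metis append_butlast_last_id)
      have m: "inM p q (U' @ [s], W' @ [t])" using x xe U W unfolding inM_le_def by auto
      have sh: "shift [s] [t] A \<in> \<A>" using assms(2) inM_snoc(2)[OF m] Suc.prems(1)
        unfolding rec_closed_def by blast
      have vs: "\<forall>y. inM_le p q N y \<longrightarrow> shift [s] [t] A y = 0"
      proof (intro allI impI)
        fix y assume y: "inM_le p q N y"
        obtain Y1 Y2 where ye: "y = (Y1, Y2)" by force
        have "inM_le p q (Suc N) (Y1 @ [s], Y2 @ [t])"
          using y ye inM_snoc(2)[OF m] unfolding inM_le_def inM_def by auto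
        then show "shift [s] [t] A y = 0" using v1 ye unfolding shift_def by auto
      qed
      have "inM_le p q (N + k) (U', W')"
        using inM_snoc(1)[OF m] x xe U unfolding inM_le_def by auto
      then have "shift [s] [t] A (U', W') = 0" using Suc.IH[OF sh vs] by blast
      then show ?thesis using xe U W unfolding shift_def by simp
    qed
  qed
qed

lemma kernel0:
  assumes "is_subspace p q \<A>" "rec_closed p q \<A>" "proj_iso p q \<A> N"
    "A \<in> \<A>" "\<forall>x. inM_le p q N x \<longrightarrow> A x = 0"
  shows "A = (\<lambda>x. 0)"
proof
  fix x :: "nat list \<times> nat list"
  obtain U W where xe: "x = (U, W)" by force
  show "A x = 0"
  proof (cases "inM p q x")
    case True
    then have "inM_le p q (N + length U) x" using xe unfolding inM_le_def by auto
    then show ?thesis using kernel[OF assms(1-3) assms(4,5)] by blast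
  next
    case False
    then show ?thesis using assms(1,4) unfolding is_subspace_def KM_def by blast
  qed
qed

lemma inj_restr:
  assumes "is_subspace p q \<A>" "rec_closed p q \<A>" "proj_iso p q \<A> N"
  shows "inj_on (restr p q N) \<A>"
proof (rule inj_onI)
  fix f g assume f: "f \<in> \<A>" and g: "g \<in> \<A>" and e: "restr p q N f = restr p q N g"
  have d: "(\<lambda>x. f x - g x) \<in> \<A>" using sub_diff[OF assms(1) f g] .
  have "\<forall>x. inM_le p q N x \<longrightarrow> f x - g x = 0"
  proof (intro allI impI)
    fix x assume "inM_le p q N x"
    then show "f x - g x = 0" using fun_cong[OF e, of x] unfolding restr_def by simp
  qed
  then have "(\<lambda>x. f x - g x) = (\<lambda>x. 0)" using kernel0[OF assms d] by blast
  then show "f = g" by (simp add: fun_eq_iff)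
qed

lemma finite_X: "finite {x. inM_le p q N x}"
proof -
  have "{x. inM_le p q N x} \<subseteq> {xs. set xs \<subseteq> {..<p} \<and> length xs \<le> N} \<times> {xs. set xs \<subseteq> {..<q} \<and> length xs \<le> N}"
    unfolding inM_le_def inM_def by auto
  moreover have "finite ({xs. set xs \<subseteq> {..<p} \<and> length xs \<le> N} \<times> {xs. set xs \<subseteq> {..<q} \<and> length xs \<le> N})"
    using finite_lists_length_le[of "{..<p}" N] finite_lists_length_le[of "{..<q}" N] by blast
  ultimately show ?thesis by (rule finite_subset)
qed

theorem mainTheorem4:
  fixes p q N :: nat and \<A> :: "(nat list \<times> nat list \<Rightarrow> 'a::field) set"
  assumes "is_subspace p q \<A>"
    and "rec_closed p q \<A>"
    and "has_saturation_level p q \<A> N"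
  shows "bij_betw (restr p q N) \<A> (restr p q N ` \<A>) \<and> fin_dim \<A> \<and> \<A> \<subseteq> Rec p q"
proof -
  have pi: "proj_iso p q \<A> N" using assms(3) unfolding has_saturation_level_def by blast
  have inj: "inj_on (restr p q N) \<A>" using inj_restr[OF assms(1,2) pi] .
  obtain B where B: "finite B" "B \<subseteq> \<A>"
    "\<forall>A\<in>\<A>. \<exists>c. \<forall>x\<in>{x. inM_le p q N x}. A x = (\<Sum>b\<in>B. c b * b x)"
    using basis_on[OF finite_X[of p q N] assms(1)] by (elim exE conjE)
  have span: "\<A> \<subseteq> lin_span B"
  proof
    fix A assume A: "A \<in> \<A>"
    obtain c where c: "\<forall>x\<in>{x. inM_le p q N x}. A x = (\<Sum>b\<in>B. c b * b x)" using B(3) A by blast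
    have S: "(\<lambda>x. \<Sum>b\<in>B. c b * b x) \<in> \<A>" using sub_sum[OF assms(1) B(1,2)] .
    have "restr p q N A = restr p q N (\<lambda>x. \<Sum>b\<in>B. c b * b x)"
      using c unfolding restr_def by auto
    then have "A = (\<lambda>x. \<Sum>b\<in>B. c b * b x)" using inj_onD[OF inj _ A S] by blast
    then show "A \<in> lin_span B" unfolding lin_span_def by blast
  qed
  have fd: "fin_dim \<A>" unfolding fin_dim_def using B span by blast
  have rec: "\<A> \<subseteq> Rec p q"
  proof
    fix A assume A: "A \<in> \<A>"
    have "A \<in> KM p q" using A assms(1) unfolding is_subspace_def by blast
    moreover have "\<forall>S T. inM p q (S, T) \<longrightarrow> shift S T A \<in> lin_span B"
      using assms(2) A span unfolding rec_closed_def by blast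
    ultimately show "A \<in> Rec p q" unfolding Rec_def using B(1) by blast
  qed
  have "bij_betw (restr p q N) \<A> (restr p q N ` \<A>)" using inj by (rule inj_on_imp_bij_betw)
  then show ?thesis using fd rec by (intro conjI)
qed

end
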